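(* Let $p\in\mathbb{R}$, $K:=\{z=(v,m,\sigma,e)\in Z: v\otimes v-\sigma=e\,\mathrm{Id},\ m=(e+p)v\}$, and let $K'\subset K$ be compact. For any $z\in\operatorname{int}(K')^{co}$ there exists $\bar z\in\Lambda$ such that $[z-\bar z,z+\bar z]\subset\operatorname{int}(K')^{co}$ and $|\bar z|\ge\frac{1}{2N}d(z,K')$, where $N=\dim Z$.
   Context: $\mathcal S_0^{2\times2}$ is the space of traceless symmetric $2\times2$ matrices, $Z:=\mathbb{R}^2\times\mathbb{R}^2\times\mathcal S_0^{2\times2}\times\mathbb{R}$, $d$ is the Euclidean distance on $Z$, $(K')^{co}$ the convex hull. The wave cone is $\Lambda=\{\bar z=(\bar v,\bar m,\bar\sigma,\bar e)\in Z:\ (\bar v,\bar e)\neq0\text{ and there is }0\ne(\xi,c)\in\mathbb{R}^2\times\mathbb{R}\text{ with }(\bar\sigma+\bar e\,\mathrm{Id})\xi+c\bar v=0,\ \bar v\cdot\xi=0,\ \bar m\cdot\xi+c\bar e=0\}$. *)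

theory Defs
  imports "HOL-Analysis.Analysis"
begin

text \<open>Ambient space: (v, m, sigma, e) with v, m in R^2, sigma a 2x2 real matrix, e real.
  The product norm is Euclidean (Frobenius on the matrix component).\<close>
type_synonym Zamb = "(real^2) \<times> (real^2) \<times> (real^2^2) \<times> real"

definition Zset :: "Zamb set" where
  "Zset = {(v, m, \<sigma>, e). transpose \<sigma> = \<sigma> \<and> trace \<sigma> = 0}"

definition outer :: "real^2 \<Rightarrow> real^2 \<Rightarrow> real^2^2" where
  "outer a b = (\<chi> i j. a $ i * b $ j)"

definition Kset :: "real \<Rightarrow> Zamb set" where
  "Kset p = {(v, m, \<sigma>, e). (v, m, \<sigma>, e) \<in> Zset \<and>
      outer v v - \<sigma> = e *\<^sub>R mat 1 \<and> m = (e + p) *\<^sub>R v}"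

definition wave_cone :: "Zamb set" where
  "wave_cone = {(v, m, \<sigma>, e). (v, m, \<sigma>, e) \<in> Zset \<and> (v, e) \<noteq> 0 \<and>
      (\<exists>(\<xi>::real^2) (c::real). (\<xi>, c) \<noteq> 0 \<and>
         (\<sigma> + e *\<^sub>R mat 1) *v \<xi> + c *\<^sub>R v = 0 \<and> v \<bullet> \<xi> = 0 \<and> m \<bullet> \<xi> + c * e = 0)}"

end

theory Submission
  imports Defs
begin

lemma vec2_eq: "(x::'a^2) = y \<longleftrightarrow> x$1 = y$1 \<and> x$2 = y$2"
  by (metis (mono_tags) exhaust_2 vec_eq_iff)

lemma mat2_eq: "(A::real^2^2) = B \<longleftrightarrow> A$1$1 = B$1$1 \<and> A$1$2 = B$1$2 \<and> A$2$1 = B$2$1 \<and> A$2$2 = B$2$2"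
  using vec2_eq[of A B] vec2_eq[of "A$1" "B$1"] vec2_eq[of "A$2" "B$2"] by auto

lemma sym2: "transpose (\<sigma>::real^2^2) = \<sigma> \<longleftrightarrow> \<sigma>$1$2 = \<sigma>$2$1"
  by (auto simp: mat2_eq transpose_def)

lemma tr2: "trace (\<sigma>::real^2^2) = \<sigma>$1$1 + \<sigma>$2$2"
  by (simp add: trace_def sum_2)

lemma Zset_iff: "x \<in> Zset \<longleftrightarrow> (fst (snd (snd x)))$1$2 = (fst (snd (snd x)))$2$1 \<and>
   (fst (snd (snd x)))$1$1 + (fst (snd (snd x)))$2$2 = 0"
  by (cases x) (auto simp: Zset_def sym2 tr2)

lemma subspace_Zset: "subspace Zset"
  unfolding subspace_def by (auto simp: Zset_iff algebra_simps simp flip: distrib_left)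

lemma inner2: "(x::real^2) \<bullet> y = x$1 * y$1 + x$2 * y$2"
  by (simp add: inner_vec_def sum_2)

lemma Kset_char:
  assumes "(v, m, \<sigma>, e) \<in> Kset p"
  shows "e = (v$1 * v$1 + v$2 * v$2)/2 \<and> \<sigma> = outer v v - e *\<^sub>R mat 1 \<and> m = (e+p) *\<^sub>R v"
proof -
  have z: "(v, m, \<sigma>, e) \<in> Zset" and o: "outer v v - \<sigma> = e *\<^sub>R mat 1" and mm: "m = (e + p) *\<^sub>R v"
    using assms by (auto simp: Kset_def)
  have t: "\<sigma>$1$1 + \<sigma>$2$2 = 0" using z by (simp add: Zset_iff)
  have "(outer v v - \<sigma>)$1$1 = e" "(outer v v - \<sigma>)$2$2 = e" using o by (auto simp: mat_def)
  then have "e = (v$1 * v$1 + v$2 * v$2)/2" using t by (simp add: outer_def)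
  moreover have "\<sigma> = outer v v - e *\<^sub>R mat 1" using o by (simp add: algebra_simps)
  ultimately show ?thesis using mm by simp
qed

lemma wave:
  assumes a: "a \<in> Kset p" and b: "b \<in> Kset p" and ne: "a \<noteq> b" and t: "t \<noteq> 0"
  shows "t *\<^sub>R (b - a) \<in> wave_cone"
proof -
  obtain v1 m1 s1 e1 where av: "a = (v1, m1, s1, e1)" by (cases a) auto
  obtain v2 m2 s2 e2 where bv: "b = (v2, m2, s2, e2)" by (cases b) auto
  note k1 = Kset_char[OF a[unfolded av]] and k2 = Kset_char[OF b[unfolded bv]]
  have s1: "s1 = outer v1 v1 - e1 *\<^sub>R mat 1" and m1: "m1 = (e1+p) *\<^sub>R v1"
   and s2: "s2 = outer v2 v2 - e2 *\<^sub>R mat 1" and m2: "m2 = (e2+p) *\<^sub>R v2"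
    using k1 k2 by auto
  have za: "a \<in> Zset" "b \<in> Zset" using a b by (auto simp: Kset_def)
  have zd: "t *\<^sub>R (b - a) \<in> Zset"
    using subspace_Zset za by (simp add: subspace_diff subspace_scale)
  have vne: "v1 \<noteq> v2"
    using ne k1 k2 av bv by auto
  define w where "w = v2 - v1"
  define \<xi> :: "real^2" where "\<xi> = (\<chi> i. if i = 1 then - w$2 else w$1)"
  have \<xi>1: "\<xi>$1 = - w$2" and \<xi>2: "\<xi>$2 = w$1" by (simp_all add: \<xi>_def)
  have wne: "w$1 \<noteq> 0 \<or> w$2 \<noteq> 0" using vne unfolding w_def by (auto simp: vec2_eq)
  have xne: "\<xi> \<noteq> 0" using wne by (auto simp: vec2_eq \<xi>1 \<xi>2)
  define c where "c = - (v1 \<bullet> \<xi>)"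
  have eq: "t *\<^sub>R (b - a) = (t *\<^sub>R (v2 - v1), t *\<^sub>R (m2 - m1), t *\<^sub>R (s2 - s1), t * (e2 - e1))"
    by (simp add: av bv)
  show ?thesis
    unfolding eq wave_cone_def mem_Collect_eq prod.case
  proof (intro conjI)
    show "(t *\<^sub>R (v2 - v1), t *\<^sub>R (m2 - m1), t *\<^sub>R (s2 - s1), t * (e2 - e1)) \<in> Zset"
      using zd eq by simp
    show "(t *\<^sub>R (v2 - v1), t * (e2 - e1)) \<noteq> 0" using t vne by (auto simp: zero_prod_def)
    show "\<exists>\<xi> c. (\<xi>, c) \<noteq> 0 \<and>
        (t *\<^sub>R (s2 - s1) + (t * (e2 - e1)) *\<^sub>R mat 1) *v \<xi> + c *\<^sub>R t *\<^sub>R (v2 - v1) = 0 \<and>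
        t *\<^sub>R (v2 - v1) \<bullet> \<xi> = 0 \<and> t *\<^sub>R (m2 - m1) \<bullet> \<xi> + c * (t * (e2 - e1)) = 0"
    proof (intro exI conjI)
      show "(\<xi>, c) \<noteq> 0" using xne by (simp add: zero_prod_def)
      show "(t *\<^sub>R (s2 - s1) + (t * (e2 - e1)) *\<^sub>R mat 1) *v \<xi> + c *\<^sub>R t *\<^sub>R (v2 - v1) = 0"
        unfolding c_def w_def s1 s2
        by (simp add: vec2_eq matrix_vector_mult_def sum_2 outer_def mat_def inner2 \<xi>1 \<xi>2 w_def algebra_simps)
      show "t *\<^sub>R (v2 - v1) \<bullet> \<xi> = 0"
        by (simp add: inner2 \<xi>1 \<xi>2 w_def algebra_simps)
      show "t *\<^sub>R (m2 - m1) \<bullet> \<xi> + c * (t * (e2 - e1)) = 0"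
        unfolding c_def m1 m2
        by (simp add: inner2 \<xi>1 \<xi>2 w_def algebra_simps)
    qed
  qed
qed

lemma finite_argmax:
  assumes "finite S" "S \<noteq> {}"
  shows "\<exists>a\<in>S. \<forall>x\<in>S. (g x :: real) \<le> g a"
  using assms
proof (induct rule: finite_ne_induct)
  case (singleton x) then show ?case by simp
next
  case (insert x F)
  then obtain a where "a \<in> F" "\<forall>y\<in>F. g y \<le> g a" by blast
  then show ?case by (cases "g x \<le> g a") auto
qed

lemma mid_interior:
  assumes CZ: "C \<subseteq> Zset" and cv: "convex C" and r: "r > 0" and B: "ball z r \<inter> Zset \<subseteq> C"
    and zZ: "z \<in> Zset" and y: "y \<in> C"
  shows "(1/2) *\<^sub>R (z + y) \<in> (top_of_set Zset) interior_of C"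
proof -
  define w where "w = (1/2) *\<^sub>R (z + y)"
  have yZ: "y \<in> Zset" using y CZ by auto
  have wZ: "w \<in> Zset" unfolding w_def using subspace_Zset zZ yZ
    by (simp add: subspace_add subspace_scale)
  have sub: "Zset \<inter> ball w (r/2) \<subseteq> C"
  proof
    fix x assume x: "x \<in> Zset \<inter> ball w (r/2)"
    define x' where "x' = 2 *\<^sub>R x - y"
    have x'Z: "x' \<in> Zset" unfolding x'_def using subspace_Zset x yZ
      by (simp add: subspace_diff subspace_scale)
    have "z - x' = 2 *\<^sub>R (w - x)" unfolding x'_def w_def by (simp add: algebra_simps)
    then have "dist z x' = 2 * dist w x" by (simp add: dist_norm)
    also have "\<dots> < r" using x by auto
    finally have "x' \<in> C" using B x'Z by auto
    moreover have "x = (1/2) *\<^sub>R x' + (1/2) *\<^sub>R y" unfolding x'_def by (simp add: algebra_simps)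
    ultimately show "x \<in> C" using cv y by (simp add: convexD)
  qed
  have "openin (top_of_set Zset) (Zset \<inter> ball w (r/2))" by (rule openin_open_Int) simp
  moreover have "w \<in> Zset \<inter> ball w (r/2)" using wZ r by simp
  ultimately show ?thesis unfolding w_def[symmetric] interior_of_def using sub by blast
qed

lemma seg_interior:
  assumes CZ: "C \<subseteq> Zset" and cv: "convex C" and r: "r > 0" and B: "ball z r \<inter> Zset \<subseteq> C"
    and zZ: "z \<in> Zset" and ys: "\<And>s. -1 \<le> s \<Longrightarrow> s \<le> 1 \<Longrightarrow> z + (2 * s) *\<^sub>R zb \<in> C"
  shows "closed_segment (z - zb) (z + zb) \<subseteq> (top_of_set Zset) interior_of C"
proof
  fix x assume "x \<in> closed_segment (z - zb) (z + zb)"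
  then obtain \<mu> where mu: "0 \<le> \<mu>" "\<mu> \<le> 1" and x: "x = (1-\<mu>) *\<^sub>R (z - zb) + \<mu> *\<^sub>R (z + zb)"
    unfolding closed_segment_def by auto
  have "x = (1/2) *\<^sub>R (z + (z + (2 * (2 * \<mu> - 1)) *\<^sub>R zb))" unfolding x
    by (simp add: algebra_simps flip: scaleR_add_left)
  moreover have "z + (2 * (2 * \<mu> - 1)) *\<^sub>R zb \<in> C" by (rule ys) (use mu in auto)
  ultimately show "x \<in> (top_of_set Zset) interior_of C"
    using mid_interior[OF CZ cv r B zZ] by simp
qed

theorem corollary2p4:
  fixes p :: real and K' :: "Zamb set" and z :: Zamb
  assumes "K' \<subseteq> Kset p" and "compact K'"
    and "z \<in> (top_of_set Zset) interior_of (convex hull K')"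
  shows "\<exists>zb \<in> wave_cone.
           closed_segment (z - zb) (z + zb) \<subseteq> (top_of_set Zset) interior_of (convex hull K') \<and>
           norm zb \<ge> infdist z K' / (2 * real (dim Zset))"
proof -
  define C where "C = convex hull K'"
  define n where "n = dim Zset"
  have KZ: "K' \<subseteq> Zset" using assms(1) by (auto simp: Kset_def)
  have CZ: "C \<subseteq> Zset" unfolding C_def
    by (rule hull_minimal[OF KZ]) (simp add: subspace_Zset subspace_imp_convex)
  have cv: "convex C" unfolding C_def by simp
  obtain T where T: "openin (top_of_set Zset) T" "z \<in> T" "T \<subseteq> C"
  proof -
    have "\<exists>T. openin (top_of_set Zset) T \<and> z \<in> T \<and> T \<subseteq> C"
      using assms(3) by (simp add: interior_of_def C_def)
    then show ?thesis using that by blast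
  qed
  obtain r where r: "r > 0" "ball z r \<inter> Zset \<subseteq> T"
    using T(1,2) unfolding openin_contains_ball by blast
  have B: "ball z r \<inter> Zset \<subseteq> C" using r(2) T(3) by blast
  have zZ: "z \<in> Zset" using openin_subset[OF T(1)] T(2) by auto
  have zC: "z \<in> C" using T(2,3) by blast
  obtain S where S: "finite S" "S \<subseteq> K'" "card S \<le> aff_dim K' + 1" "z \<in> convex hull S"
    using zC unfolding C_def caratheodory_aff_dim[of K'] by blast
  have "aff_dim K' \<le> aff_dim Zset" using KZ by (rule aff_dim_subset)
  then have cardS: "card S \<le> n + 1" using S(3) aff_dim_subspace[OF subspace_Zset] unfolding n_def by linarith
  obtain u where u: "\<forall>x\<in>S. 0 \<le> u x" "sum u S = 1" "(\<Sum>x\<in>S. u x *\<^sub>R x) = z"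
    using S(4) unfolding convex_hull_finite[OF S(1)] by blast
  have Sne: "S \<noteq> {}" using u(2) by auto
  obtain a where a: "a \<in> S" "\<forall>x\<in>S. u x \<le> u a"
    using finite_argmax[OF S(1) Sne, of u] by blast
  define f where "f x = u x * norm (x - a)" for x
  obtain j where j: "j \<in> S" "\<forall>x\<in>S. f x \<le> f j"
    using finite_argmax[OF S(1) Sne, of f] by blast
  have za: "z - a = (\<Sum>x\<in>S. u x *\<^sub>R (x - a))"
    using u by (simp add: scaleR_diff_right sum_subtractf flip: scaleR_sum_left)
  have "norm (z - a) \<le> (\<Sum>x\<in>S. norm (u x *\<^sub>R (x - a)))" unfolding za by (rule norm_sum)
  also have "\<dots> = (\<Sum>x\<in>S. f x)" using u(1) by (intro sum.cong) (auto simp: f_def)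
  also have "\<dots> = (\<Sum>x\<in>S - {a}. f x)" using sum.remove[OF S(1) a(1), of f] by (simp add: f_def)
  also have "\<dots> \<le> of_nat (card (S - {a})) * f j" using j by (intro sum_bounded_above) auto
  also have "\<dots> \<le> of_nat n * f j"
  proof -
    have "card (S - {a}) \<le> n" using cardS a(1) S(1) by (simp add: card_Diff_singleton)
    moreover have "f j \<ge> 0" using u(1) j(1) by (simp add: f_def)
    ultimately show ?thesis by (simp add: mult_right_mono)
  qed
  finally have dle: "infdist z K' \<le> of_nat n * f j"
    using infdist_le[of a K' z] a(1) S(2) by (auto simp: dist_norm)
  show ?thesis
  proof (cases "f j > 0")
    case True
    then have uj: "u j > 0" and ja: "j \<noteq> a" using u(1) j(1) by (auto simp: f_def zero_less_mult_iff)
    define zb where "zb = (u j / 2) *\<^sub>R (j - a)"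
    have wc: "zb \<in> wave_cone" unfolding zb_def
      using wave[of a p j "u j / 2"] a(1) j(1) S(2) assms(1) ja uj by auto
    have nzb: "norm zb = f j / 2" unfolding zb_def f_def using uj by simp
    have bound: "infdist z K' / (2 * real n) \<le> norm zb"
    proof (cases "n = 0")
      case True then show ?thesis by simp
    next
      case False
      then have "infdist z K' / (2 * real n) \<le> (real n * f j) / (2 * real n)"
        using dle by (intro divide_right_mono) auto
      also have "\<dots> = norm zb" using False nzb by simp
      finally show ?thesis .
    qed
    have ys: "z + (2 * s) *\<^sub>R zb \<in> C" if s: "-1 \<le> s" "s \<le> 1" for s
    proof -
      define c where "c = s * u j"
      define u' where "u' x = u x + (if x = j then c else 0) - (if x = a then c else 0)" for x
      have "\<forall>x\<in>S. 0 \<le> u' x"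
      proof
        fix x assume x: "x \<in> S"
        have "\<bar>c\<bar> \<le> u j" unfolding c_def using s uj mult_right_mono[of "\<bar>s\<bar>" 1 "u j"] by (simp add: abs_mult)
        moreover have "u j \<le> u a" using a j by auto
        ultimately show "0 \<le> u' x" unfolding u'_def using ja u(1) x by auto
      qed
      moreover have "sum u' S = 1" unfolding u'_def
        using u(2) S(1) a(1) j(1) by (simp add: sum.distrib sum_subtractf)
      moreover have "(\<Sum>x\<in>S. u' x *\<^sub>R x) = z + (2 * s) *\<^sub>R zb"
      proof -
        have e1: "(\<Sum>x\<in>S. (if x = j then c else 0) *\<^sub>R x) = c *\<^sub>R j"
          using S(1) j(1) by (simp add: if_distrib[of "\<lambda>t. t *\<^sub>R _"] cong: if_cong)
        have e2: "(\<Sum>x\<in>S. (if x = a then c else 0) *\<^sub>R x) = c *\<^sub>R a"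
          using S(1) a(1) by (simp add: if_distrib[of "\<lambda>t. t *\<^sub>R _"] cong: if_cong)
        have "(\<Sum>x\<in>S. u' x *\<^sub>R x) = (\<Sum>x\<in>S. u x *\<^sub>R x) + (\<Sum>x\<in>S. (if x = j then c else 0) *\<^sub>R x)
              - (\<Sum>x\<in>S. (if x = a then c else 0) *\<^sub>R x)"
          unfolding u'_def by (simp add: scaleR_add_left scaleR_diff_left sum.distrib sum_subtractf)
        also have "\<dots> = z + (2 * s) *\<^sub>R zb" unfolding e1 e2 u(3)
          by (simp add: zb_def c_def algebra_simps)
        finally show ?thesis .
      qed
      ultimately have "z + (2 * s) *\<^sub>R zb \<in> convex hull S"
        unfolding convex_hull_finite[OF S(1)] by blast
      then show ?thesis unfolding C_def using hull_mono[OF S(2)] by blast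
    qed
    show ?thesis
      using wc bound seg_interior[OF CZ cv r(1) B zZ ys] unfolding C_def n_def by auto
  next
    case False
    moreover have "f j \<ge> 0" using u(1) j(1) by (simp add: f_def)
    ultimately have "f j = 0" by linarith
    then have d0: "infdist z K' \<le> 0" using dle by simp
    obtain b where b: "b \<in> K'" using zC unfolding C_def by (cases "K' = {}") auto
    obtain c where c: "c \<in> K'" "c \<noteq> b"
    proof (rule ccontr)
      assume "\<not> thesis"
      then have "K' = {b}" using b that by blast
      then have Cb: "C = {b}" unfolding C_def by simp
      define e :: Zamb where "e = (0, 0, 0, r/2)"
      have "e \<in> Zset" unfolding e_def by (simp add: Zset_iff)
      then have "z + e \<in> Zset" using zZ subspace_Zset by (simp add: subspace_add)
      moreover have "dist z (z + e) < r" using r(1) by (simp add: dist_norm e_def)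
      ultimately have "z + e \<in> C" using B by auto
      moreover have "e \<noteq> 0" using r(1) by (simp add: e_def zero_prod_def)
      ultimately show False using Cb zC by auto
    qed
    have ncb: "norm (c - b) > 0" using c by simp
    define zb where "zb = (r / (4 * norm (c - b))) *\<^sub>R (c - b)"
    have wc: "zb \<in> wave_cone" unfolding zb_def
      using wave[of b p c "r / (4 * norm (c - b))"] b c assms(1) ncb r(1) by auto
    have nzb: "norm zb = r / 4" unfolding zb_def using ncb r(1) by simp
    have "infdist z K' / (2 * real n) \<le> 0"
      using d0 by (simp add: divide_nonpos_nonneg)
    then have bound: "infdist z K' / (2 * real n) \<le> norm zb" using norm_ge_zero[of zb] by linarith
    have ys: "z + (2 * s) *\<^sub>R zb \<in> C" if s: "-1 \<le> s" "s \<le> 1" for s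
    proof -
      have "b \<in> Zset" "c \<in> Zset" using b c KZ by auto
      then have "zb \<in> Zset" unfolding zb_def using subspace_Zset
        by (simp add: subspace_diff subspace_scale)
      then have "z + (2 * s) *\<^sub>R zb \<in> Zset" using zZ subspace_Zset by (simp add: subspace_add subspace_scale)
      moreover have "norm ((2 * s) *\<^sub>R zb) < r"
      proof -
        have "norm ((2 * s) *\<^sub>R zb) = 2 * \<bar>s\<bar> * (r/4)" by (simp add: nzb abs_mult)
        also have "\<dots> \<le> 2 * 1 * (r/4)" using s r(1) by (intro mult_right_mono) auto
        finally show ?thesis using r(1) by simp
      qed
      ultimately show ?thesis using B by (auto simp: dist_norm)
    qed
    show ?thesis
      using wc bound seg_interior[OF CZ cv r(1) B zZ ys] unfolding C_def n_def by auto
  qed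
qed

end
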